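(* For conjunctive guarded systems of type $(A,B)$: for all $n\ge1$, if $(A,B)^{(1,n)}$ has a deadlock then $(A,B)^{(1,n+1)}$ has a deadlock.
   Context: A process template is $U=(Q_U,\mathit{init}_U,\Sigma_U,\delta_U)$ with finite states $Q_U$, initial state $\mathit{init}_U$, finite input alphabet $\Sigma_U$ and guarded transitions $\delta_U\subseteq Q_U\times\Sigma_U\times 2^{Q_A\cup Q_B}\times Q_U$; templates $A,B$ have disjoint state sets and disjoint alphabets. The system $(A,B)^{(1,n)}$ consists of one copy of $A$ and $n$ copies $B_1,\dots,B_n$ of $B$; a global state $s$ gives each process a local state, a global input $e$ gives each process an input letter, and initially all processes are in their initial states. In a conjunctive system a guard $g$ is satisfied for process $p$ in $s$ iff every process $p'\ne p$ has $s(p')\in g$, and $\mathit{init}_A,\mathit{init}_B$ belong to every guard. A local transition $(q,\sigma,g,q')$ of $p$ is enabled for $(s,e)$ if $s(p)=q$, $e(p)=\sigma$ and $g$ is satisfied for $p$ in $s$; a process is enabled if one of its transitions is; a global step changes the state of exactly one process along an enabled transition. A path is a sequence of configurations $(s_1,e_1,p_1),(s_2,e_2,p_2),\dots$ where $p_t$ makes the step from $s_t$ to $s_{t+1}$ under $e_t$, a configuration $(s,e,\bot)$ occurs (as the last one) exactly when all processes are disabled, and $e_{t+1}(p)=e_t(p)$ for every process $p$ not moving at moment $t$. A run is a maximal path from the initial state. A run is globally deadlocked if it is finite; an infinite run is locally deadlocked if some process is disabled at all moments from some moment on; a system has a deadlock if it has a globally or locally deadlocked run. *)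

theory Defs
  imports Main
begin

record ('q, 's) template =
  states :: "'q set"
  init :: 'q
  alpha :: "'s set"
  delta :: "('q \<times> 's \<times> 'q set \<times> 'q) set"

definition wf_template :: "('q, 's) template \<Rightarrow> 'q set \<Rightarrow> bool" where
  "wf_template U QAB \<longleftrightarrow> finite (states U) \<and> init U \<in> states U \<and> finite (alpha U) \<and>
     delta U \<subseteq> states U \<times> alpha U \<times> Pow QAB \<times> states U"

definition conj_system_type :: "('q, 's) template \<Rightarrow> ('q, 's) template \<Rightarrow> bool" where
  "conj_system_type A B \<longleftrightarrow>
     states A \<inter> states B = {} \<and> alpha A \<inter> alpha B = {} \<and>
     wf_template A (states A \<union> states B) \<and> wf_template B (states A \<union> states B) \<and>
     (\<forall>q \<sigma> g q'. (q, \<sigma>, g, q') \<in> delta A \<union> delta B \<longrightarrow> init A \<in> g \<and> init B \<in> g)"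

text \<open>In (A,B)^(1,n) the processes are 0 (the copy of A) and 1..n (the copies of B).\<close>
definition procs :: "nat \<Rightarrow> nat set" where
  "procs n = {0..n}"

definition tmpl :: "('q, 's) template \<Rightarrow> ('q, 's) template \<Rightarrow> nat \<Rightarrow> ('q, 's) template" where
  "tmpl A B p = (if p = 0 then A else B)"

definition guard_sat :: "nat \<Rightarrow> 'q set \<Rightarrow> nat \<Rightarrow> (nat \<Rightarrow> 'q) \<Rightarrow> bool" where
  "guard_sat n g p s \<longleftrightarrow> (\<forall>p'\<in>procs n. p' \<noteq> p \<longrightarrow> s p' \<in> g)"

definition trans_enabled ::
  "('q, 's) template \<Rightarrow> ('q, 's) template \<Rightarrow> nat \<Rightarrow> nat \<Rightarrow> ('q \<times> 's \<times> 'q set \<times> 'q)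
     \<Rightarrow> (nat \<Rightarrow> 'q) \<Rightarrow> (nat \<Rightarrow> 's) \<Rightarrow> bool" where
  "trans_enabled A B n p tr s e \<longleftrightarrow>
     (case tr of (q, \<sigma>, g, q') \<Rightarrow>
        tr \<in> delta (tmpl A B p) \<and> s p = q \<and> e p = \<sigma> \<and> guard_sat n g p s)"

definition proc_enabled ::
  "('q, 's) template \<Rightarrow> ('q, 's) template \<Rightarrow> nat \<Rightarrow> nat \<Rightarrow> (nat \<Rightarrow> 'q) \<Rightarrow> (nat \<Rightarrow> 's) \<Rightarrow> bool" where
  "proc_enabled A B n p s e \<longleftrightarrow> (\<exists>tr. trans_enabled A B n p tr s e)"

definition valid_input :: "('q, 's) template \<Rightarrow> ('q, 's) template \<Rightarrow> nat \<Rightarrow> (nat \<Rightarrow> 's) \<Rightarrow> bool" where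
  "valid_input A B n e \<longleftrightarrow> (\<forall>p\<in>procs n. e p \<in> alpha (tmpl A B p))"

definition initial_state :: "('q, 's) template \<Rightarrow> ('q, 's) template \<Rightarrow> nat \<Rightarrow> (nat \<Rightarrow> 'q) \<Rightarrow> bool" where
  "initial_state A B n s \<longleftrightarrow> (\<forall>p\<in>procs n. s p = init (tmpl A B p))"

definition gstep ::
  "('q, 's) template \<Rightarrow> ('q, 's) template \<Rightarrow> nat \<Rightarrow> (nat \<Rightarrow> 'q) \<Rightarrow> (nat \<Rightarrow> 's) \<Rightarrow> nat
     \<Rightarrow> (nat \<Rightarrow> 'q) \<Rightarrow> bool" where
  "gstep A B n s e p s' \<longleftrightarrow> p \<in> procs n \<and>
     (\<exists>q \<sigma> g q'. trans_enabled A B n p (q, \<sigma>, g, q') s e \<and> s' = s(p := q'))"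

definition path_step ::
  "('q, 's) template \<Rightarrow> ('q, 's) template \<Rightarrow> nat \<Rightarrow> (nat \<Rightarrow> nat \<Rightarrow> 'q) \<Rightarrow> (nat \<Rightarrow> nat \<Rightarrow> 's)
     \<Rightarrow> nat \<Rightarrow> nat \<Rightarrow> bool" where
  "path_step A B n S E t p \<longleftrightarrow> gstep A B n (S t) (E t) p (S (Suc t)) \<and>
     (\<forall>p'\<in>procs n. p' \<noteq> p \<longrightarrow> E (Suc t) p' = E t p')"

text \<open>Finite (hence globally deadlocked) run: configurations 0..k, the configurations
  0..k-1 are (S t, E t, P t) with a moving process P t, the last one is (S k, E k, \<bottom>)
  with all processes disabled.\<close>
definition finite_run ::
  "('q, 's) template \<Rightarrow> ('q, 's) template \<Rightarrow> nat \<Rightarrow> (nat \<Rightarrow> nat \<Rightarrow> 'q) \<Rightarrow> (nat \<Rightarrow> nat \<Rightarrow> 's)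
     \<Rightarrow> (nat \<Rightarrow> nat) \<Rightarrow> nat \<Rightarrow> bool" where
  "finite_run A B n S E P k \<longleftrightarrow>
     initial_state A B n (S 0) \<and>
     (\<forall>t\<le>k. valid_input A B n (E t)) \<and>
     (\<forall>t<k. path_step A B n S E t (P t)) \<and>
     (\<forall>p\<in>procs n. \<not> proc_enabled A B n p (S k) (E k))"

definition infinite_run ::
  "('q, 's) template \<Rightarrow> ('q, 's) template \<Rightarrow> nat \<Rightarrow> (nat \<Rightarrow> nat \<Rightarrow> 'q) \<Rightarrow> (nat \<Rightarrow> nat \<Rightarrow> 's)
     \<Rightarrow> (nat \<Rightarrow> nat) \<Rightarrow> bool" where
  "infinite_run A B n S E P \<longleftrightarrow>
     initial_state A B n (S 0) \<and>
     (\<forall>t. valid_input A B n (E t)) \<and>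
     (\<forall>t. path_step A B n S E t (P t))"

definition locally_deadlocked ::
  "('q, 's) template \<Rightarrow> ('q, 's) template \<Rightarrow> nat \<Rightarrow> (nat \<Rightarrow> nat \<Rightarrow> 'q) \<Rightarrow> (nat \<Rightarrow> nat \<Rightarrow> 's) \<Rightarrow> bool" where
  "locally_deadlocked A B n S E \<longleftrightarrow>
     (\<exists>p\<in>procs n. \<exists>t0. \<forall>t\<ge>t0. \<not> proc_enabled A B n p (S t) (E t))"

definition has_deadlock :: "('q, 's) template \<Rightarrow> ('q, 's) template \<Rightarrow> nat \<Rightarrow> bool" where
  "has_deadlock A B n \<longleftrightarrow>
     (\<exists>S E P k. finite_run A B n S E P k) \<or>
     (\<exists>S E P. infinite_run A B n S E P \<and> locally_deadlocked A B n S E)"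

end

theory Submission
  imports Defs
begin

lemma tmpl_Suc: "tmpl A B (Suc n) = B" by (simp add: tmpl_def)

lemma init_in_guard:
  assumes "conj_system_type A B" "(q, \<sigma>, g, q') \<in> delta (tmpl A B p)"
  shows "init B \<in> g"
  using assms unfolding conj_system_type_def tmpl_def by (auto split: if_splits)

lemma trans_up:
  assumes "conj_system_type A B" "p \<le> n" "trans_enabled A B n p tr s e"
  shows "trans_enabled A B (Suc n) p tr (s(Suc n := init B)) (e(Suc n := y))"
proof -
  obtain q \<sigma> g q' where tr: "tr = (q, \<sigma>, g, q')" by (cases tr) auto
  have d: "tr \<in> delta (tmpl A B p)" and "s p = q" "e p = \<sigma>" and gs: "guard_sat n g p s"
    using assms(3) tr by (auto simp: trans_enabled_def)
  have "init B \<in> g" using init_in_guard[OF assms(1)] d tr by blast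
  then have "guard_sat (Suc n) g p (s(Suc n := init B))"
    using gs assms(2) by (auto simp: guard_sat_def procs_def)
  then show ?thesis using d tr \<open>s p = q\<close> \<open>e p = \<sigma>\<close> assms(2)
    by (auto simp: trans_enabled_def)
qed

lemma enabled_down:
  assumes "p \<le> n" "proc_enabled A B (Suc n) p (s(Suc n := x)) (e(Suc n := y))"
  shows "proc_enabled A B n p s e"
proof -
  obtain tr where t: "trans_enabled A B (Suc n) p tr (s(Suc n := x)) (e(Suc n := y))"
    using assms(2) by (auto simp: proc_enabled_def)
  obtain q \<sigma> g q' where tr: "tr = (q, \<sigma>, g, q')" by (cases tr) auto
  have "trans_enabled A B n p tr s e"
    using t tr assms(1) by (auto simp: trans_enabled_def guard_sat_def procs_def)
  then show ?thesis unfolding proc_enabled_def by blast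
qed

lemma gstep_up:
  assumes "conj_system_type A B" "gstep A B n s e p s'"
  shows "gstep A B (Suc n) (s(Suc n := init B)) (e(Suc n := y)) p (s'(Suc n := init B))"
proof -
  obtain q \<sigma> g q' where p: "p \<in> procs n" and t: "trans_enabled A B n p (q, \<sigma>, g, q') s e"
    and s': "s' = s(p := q')"
    using assms(2) by (auto simp: gstep_def)
  have pn: "p \<le> n" using p by (simp add: procs_def)
  have "trans_enabled A B (Suc n) p (q, \<sigma>, g, q') (s(Suc n := init B)) (e(Suc n := y))"
    using trans_up[OF assms(1) pn t] .
  moreover have "s'(Suc n := init B) = (s(Suc n := init B))(p := q')"
    using s' pn by (auto simp: fun_eq_iff)
  ultimately show ?thesis using pn by (auto simp: gstep_def procs_def)
qed

lemma path_step_up: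
  assumes "conj_system_type A B" "path_step A B n S E t p"
    and "S' t = (S t)(Suc n := init B)" "S' (Suc t) = (S (Suc t))(Suc n := init B)"
    and "E' t = (E t)(Suc n := y)" "E' (Suc t) = (E (Suc t))(Suc n := y)"
  shows "path_step A B (Suc n) S' E' t p"
proof -
  have g: "gstep A B n (S t) (E t) p (S (Suc t))" and k: "\<forall>p'\<in>procs n. p' \<noteq> p \<longrightarrow> E (Suc t) p' = E t p'"
    using assms(2) by (auto simp: path_step_def)
  have "gstep A B (Suc n) (S' t) (E' t) p (S' (Suc t))"
    using gstep_up[OF assms(1) g, of y] assms(3-5) by simp
  moreover have "\<forall>p'\<in>procs (Suc n). p' \<noteq> p \<longrightarrow> E' (Suc t) p' = E' t p'"
    using k assms(5,6) by (auto simp: procs_def)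
  ultimately show ?thesis by (simp add: path_step_def)
qed

lemma valid_up:
  assumes "valid_input A B n e" "y \<in> alpha B"
  shows "valid_input A B (Suc n) (e(Suc n := y))"
  using assms by (auto simp: valid_input_def procs_def tmpl_def)

lemma initial_up:
  assumes "initial_state A B n s"
  shows "initial_state A B (Suc n) (s(Suc n := init B))"
  using assms by (auto simp: initial_state_def procs_def tmpl_def)

theorem mainTheorem14:
  fixes A B :: "('q, 's) template" and n :: nat
  assumes "conj_system_type A B"
    and "n \<ge> 1"
    and "has_deadlock A B n"
  shows "has_deadlock A B (Suc n)"
proof -
  have wfB: "delta B \<subseteq> states B \<times> alpha B \<times> Pow (states A \<union> states B) \<times> states B"
    using assms(1) by (simp add: conj_system_type_def wf_template_def)
  from assms(3) consider (fin) S E P k where "finite_run A B n S E P k"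
    | (inf) S E P where "infinite_run A B n S E P" "locally_deadlocked A B n S E"
    unfolding has_deadlock_def by blast
  then show ?thesis
  proof cases
    case inf
    have v0: "valid_input A B n (E 0)" using inf by (simp add: infinite_run_def)
    define \<sigma>0 where "\<sigma>0 = E 0 1"
    have s0: "\<sigma>0 \<in> alpha B" proof -
      have "1 \<in> procs n" using assms(2) by (simp add: procs_def)
      then show ?thesis using v0 by (auto simp: valid_input_def tmpl_def \<sigma>0_def)
    qed
    define S' where "S' = (\<lambda>t. (S t)(Suc n := init B))"
    define E' where "E' = (\<lambda>t. (E t)(Suc n := \<sigma>0))"
    have "infinite_run A B (Suc n) S' E' P"
      using inf s0 unfolding infinite_run_def S'_def E'_def
      by (auto intro!: initial_up valid_up path_step_up[OF assms(1)])
    moreover have "locally_deadlocked A B (Suc n) S' E'"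
      using inf(2) unfolding locally_deadlocked_def S'_def E'_def
      by (fastforce simp: procs_def dest: enabled_down)
    ultimately show ?thesis unfolding has_deadlock_def by blast
  next
    case fin
    have v0: "valid_input A B n (E 0)" using fin by (simp add: finite_run_def)
    define \<sigma>0 where "\<sigma>0 = E 0 1"
    have s0: "\<sigma>0 \<in> alpha B" proof -
      have "1 \<in> procs n" using assms(2) by (simp add: procs_def)
      then show ?thesis using v0 by (auto simp: valid_input_def tmpl_def \<sigma>0_def)
    qed
    define Ex where "Ex x \<longleftrightarrow> (\<exists>\<sigma> g q'. (x,\<sigma>,g,q') \<in> delta B \<and> (\<forall>p\<in>procs n. S k p \<in> g))" for x
    define nxt where "nxt x = (SOME pr. \<exists>g. (x, fst pr, g, snd pr) \<in> delta B \<and> (\<forall>p\<in>procs n. S k p \<in> g))" for x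
    have nxt: "\<exists>g. (x, fst (nxt x), g, snd (nxt x)) \<in> delta B \<and> (\<forall>p\<in>procs n. S k p \<in> g)" if "Ex x" for x
    proof -
      from that obtain \<sigma> g q' where "(x,\<sigma>,g,q') \<in> delta B \<and> (\<forall>p\<in>procs n. S k p \<in> g)"
        unfolding Ex_def by blast
      then have "\<exists>pr. \<exists>g. (x, fst pr, g, snd pr) \<in> delta B \<and> (\<forall>p\<in>procs n. S k p \<in> g)"
        by (intro exI[where x="(\<sigma>,q')"]) auto
      then show ?thesis unfolding nxt_def by (rule someI_ex)
    qed
    define f where "f x = (if Ex x then snd (nxt x) else x)" for x
    define X where "X m = (f ^^ m) (init B)" for m
    have X0: "X 0 = init B" by (simp add: X_def)
    have XS: "X (Suc m) = f (X m)" for m by (simp add: X_def)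
    define Y where "Y m = (if Ex (X m) then fst (nxt (X m)) else \<sigma>0)" for m
    have Yv: "Y m \<in> alpha B" for m
      using nxt[of "X m"] wfB s0 unfolding Y_def by auto
    define S' where "S' t = (S (min t k))(Suc n := X (t - k))" for t
    define E' where "E' t = (E (min t k))(Suc n := Y (t - k))" for t
    define P' where "P' t = (if t < k then P t else Suc n)" for t
    have FR: "initial_state A B n (S 0)" "\<forall>t\<le>k. valid_input A B n (E t)"
      "\<forall>t<k. path_step A B n S E t (P t)" "\<forall>p\<in>procs n. \<not> proc_enabled A B n p (S k) (E k)"
      using fin by (auto simp: finite_run_def)
    have init': "initial_state A B (Suc n) (S' 0)"
      using FR(1) by (simp add: S'_def X0 initial_up)
    have valid': "valid_input A B (Suc n) (E' t)" for t
      unfolding E'_def using FR(2) Yv by (auto intro!: valid_up)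
    have step': "path_step A B (Suc n) S' E' t (P' t)" if "t < k \<or> Ex (X (t - k))" for t
    proof (cases "t < k")
      case True
      show ?thesis unfolding P'_def using True
        by (auto intro!: path_step_up[OF assms(1), where y="Y 0"] FR(3)[rule_format]
            simp: S'_def E'_def X0)
    next
      case False
      define m where "m = t - k"
      have e: "Ex (X m)" using that False m_def by simp
      have tS: "Suc t - k = Suc m" using False m_def by simp
      obtain g where g: "(X m, Y m, g, X (Suc m)) \<in> delta B" "\<forall>p\<in>procs n. S k p \<in> g"
        using nxt[OF e] e by (auto simp: Y_def XS f_def)
      have st: "S' t = (S k)(Suc n := X m)" "S' (Suc t) = (S k)(Suc n := X (Suc m))"
        "E' t = (E k)(Suc n := Y m)" "E' (Suc t) = (E k)(Suc n := Y (Suc m))"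
        using False tS by (auto simp: S'_def E'_def m_def min_def)
      have "trans_enabled A B (Suc n) (Suc n) (X m, Y m, g, X (Suc m)) (S' t) (E' t)"
        using g st by (auto simp: trans_enabled_def tmpl_Suc guard_sat_def procs_def)
      then have "gstep A B (Suc n) (S' t) (E' t) (Suc n) (S' (Suc t))"
        using st by (auto simp: gstep_def procs_def)
      moreover have "\<forall>p'\<in>procs (Suc n). p' \<noteq> Suc n \<longrightarrow> E' (Suc t) p' = E' t p'"
        using st by auto
      ultimately show ?thesis using False by (simp add: path_step_def P'_def)
    qed
    have dis': "\<not> proc_enabled A B (Suc n) p (S' t) (E' t)" if "t \<ge> k" "p \<le> n" for t p
    proof
      assume "proc_enabled A B (Suc n) p (S' t) (E' t)"
      then have "proc_enabled A B (Suc n) p ((S k)(Suc n := X (t - k))) ((E k)(Suc n := Y (t - k)))"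
        using that by (simp add: S'_def E'_def min_absorb2)
      then have "proc_enabled A B n p (S k) (E k)" by (rule enabled_down[OF that(2)])
      then show False using FR(4) that(2) by (auto simp: procs_def)
    qed
    show ?thesis
    proof (cases "\<forall>m. Ex (X m)")
      case True
      have "infinite_run A B (Suc n) S' E' P'"
        unfolding infinite_run_def using init' valid' step' True by blast
      moreover have "locally_deadlocked A B (Suc n) S' E'"
        unfolding locally_deadlocked_def using dis'
        by (intro bexI[where x=0]) (auto simp: procs_def)
      ultimately show ?thesis unfolding has_deadlock_def by blast
    next
      case False
      define m0 where "m0 = (LEAST m. \<not> Ex (X m))"
      have nm0: "\<not> Ex (X m0)" using False unfolding m0_def by (metis LeastI)
      have lt: "Ex (X m)" if "m < m0" for m using not_less_Least[OF that[unfolded m0_def]] by blast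
      have "finite_run A B (Suc n) S' E' P' (k + m0)"
        unfolding finite_run_def
      proof (intro conjI allI impI ballI)
        show "initial_state A B (Suc n) (S' 0)" by (rule init')
      next
        fix t show "valid_input A B (Suc n) (E' t)" by (rule valid')
      next
        fix t assume "t < k + m0" then show "path_step A B (Suc n) S' E' t (P' t)"
        proof -
          have "t < k \<or> Ex (X (t - k))" using lt \<open>t < k + m0\<close> by (cases "t < k") auto
          then show ?thesis by (rule step')
        qed
      next
        fix p assume p: "p \<in> procs (Suc n)"
        show "\<not> proc_enabled A B (Suc n) p (S' (k + m0)) (E' (k + m0))"
        proof (cases "p \<le> n")
          case True then show ?thesis using dis' by simp
        next
          case False
          then have pS: "p = Suc n" using p by (simp add: procs_def)
          show ?thesis
          proof
            assume "proc_enabled A B (Suc n) p (S' (k + m0)) (E' (k + m0))"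
            then obtain q \<sigma> g q' where t: "trans_enabled A B (Suc n) (Suc n) (q, \<sigma>, g, q') (S' (k + m0)) (E' (k + m0))"
              using pS by (auto simp: proc_enabled_def)
            have "S' (k + m0) (Suc n) = X m0" by (simp add: S'_def)
            moreover have "S' (k + m0) p' = S k p'" if "p' \<le> n" for p' using that by (simp add: S'_def)
            ultimately have "(X m0, \<sigma>, g, q') \<in> delta B \<and> (\<forall>p\<in>procs n. S k p \<in> g)"
              using t by (auto simp: trans_enabled_def tmpl_Suc guard_sat_def procs_def)
            then have "Ex (X m0)" unfolding Ex_def by blast
            then show False using nm0 by simp
          qed
        qed
      qed
      then show ?thesis unfolding has_deadlock_def by blast
    qed
  qed
qed

end
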